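(* Let $A$ be an invertible $n\times n$ matrix and $b\in BMO^A(\mathbb R^n)$. Then at least one of the following holds: (i) $b$ has no critical points; (ii) $0$ is the only critical point of $b$; (iii) whenever $0\neq z\in\mathbb R^n$ is a critical point of $b$, the points $A^jz$, $j=1,2,\dots$, are also critical points of $b$.
   Context: For an invertible matrix $A$, $BMO^A(\mathbb R^n)$ is the set of $b\in BMO(\mathbb R^n)$ with $\sup_B|\fint_B b-\fint_{A(B)}b|<\infty$, sup over all balls $B$, where $A(B)=\{Ax:x\in B\}$. A point $z\in\mathbb R^n$ is a critical point of a $BMO$ function $b$ if for every $\varepsilon>0$ and every $N>0$ there is a ball $B\subset B(z,\varepsilon)$ with $\fint_B b>N$. *)

theory Defs
  imports "HOL-Analysis.Analysis"
begin

definition avg :: "(real^'n \<Rightarrow> real) \<Rightarrow> (real^'n) set \<Rightarrow> real" where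
  "avg b S = (LINT x:S|lebesgue. b x) / measure lebesgue S"

definition BMO :: "(real^'n \<Rightarrow> real) set" where
  "BMO = {b. (\<forall>K. compact K \<longrightarrow> set_integrable lebesgue K b) \<and>
     (\<exists>M. \<forall>c r. r > 0 \<longrightarrow> avg (\<lambda>x. \<bar>b x - avg b (ball c r)\<bar>) (ball c r) \<le> M)}"

definition BMO_A :: "real^'n^'n \<Rightarrow> (real^'n \<Rightarrow> real) set" where
  "BMO_A A = {b. b \<in> BMO \<and>
     (\<exists>M. \<forall>c r. r > 0 \<longrightarrow>
        \<bar>avg b (ball c r) - avg b ((\<lambda>x. A *v x) ` ball c r)\<bar> \<le> M)}"

definition critical_point :: "(real^'n \<Rightarrow> real) \<Rightarrow> real^'n \<Rightarrow> bool" where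
  "critical_point b z \<longleftrightarrow> (\<forall>\<epsilon>>0. \<forall>N>0. \<exists>c r. r > 0 \<and> ball c r \<subseteq> ball z \<epsilon> \<and> avg b (ball c r) > N)"

end

theory Submission
  imports Defs
begin

lemma BMO_int_ball:
  fixes b :: "real^'n \<Rightarrow> real"
  assumes "b \<in> BMO" "S \<in> sets lebesgue" "S \<subseteq> ball x s"
  shows "set_integrable lebesgue S b"
proof -
  have "set_integrable lebesgue (cball x s) b"
    using assms(1) unfolding BMO_def by auto
  then show ?thesis
    by (rule set_integrable_subset) (use assms in auto)
qed

lemma measure_ball_leb:
  fixes x :: "real^'n"
  assumes "s \<ge> 0"
  shows "measure lebesgue (ball x s) = s ^ CARD('n) * measure lebesgue (ball (0::real^'n) 1)"
  using content_ball_conv_unit_ball[OF assms, of x] by simp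

lemma avg_subset_ball:
  fixes b :: "real^'n \<Rightarrow> real"
  assumes "b \<in> BMO" "0 < k"
  shows "\<exists>K. \<forall>E x s. s > 0 \<and> E \<in> sets lebesgue \<and> ball x (k * s) \<subseteq> E \<and> E \<subseteq> ball x s
           \<longrightarrow> avg b E \<le> avg b (ball x s) + K"
proof -
  obtain M where M: "\<And>c r. r > 0 \<Longrightarrow> avg (\<lambda>x. \<bar>b x - avg b (ball c r)\<bar>) (ball c r) \<le> M"
    using assms(1) unfolding BMO_def by auto
  define K where "K = M / k ^ CARD('n)"
  have "avg b E \<le> avg b (ball x s) + K"
    if s: "s > 0" and E: "E \<in> sets lebesgue" "ball x (k * s) \<subseteq> E" "E \<subseteq> ball x s" for E x s
  proof -
    define Bs where "Bs = ball x s"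
    define a where "a = avg b Bs"
    define w where "w = measure lebesgue (ball (0::real^'n) 1)"
    have w: "w > 0" unfolding w_def using content_ball_pos[of 1 "0::real^'n"] by simp
    have mB: "measure lebesgue Bs = s ^ CARD('n) * w"
      unfolding Bs_def w_def using measure_ball_leb[of s x] s by simp
    have Efm: "E \<in> fmeasurable lebesgue"
      using fmeasurableI2[OF lmeasurable_ball E(3) E(1)] .
    have "measure lebesgue (ball x (k * s)) \<le> measure lebesgue E"
      by (rule measure_mono_fmeasurable[OF E(2) _ Efm]) simp
    moreover have "measure lebesgue (ball x (k * s)) = (k * s) ^ CARD('n) * w"
      unfolding w_def using measure_ball_leb[of "k * s" x] s assms(2) by simp
    ultimately have mE: "(k * s) ^ CARD('n) * w \<le> measure lebesgue E" by simp
    have mEpos: "measure lebesgue E > 0"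
      using mE w s assms(2) by (smt (verit) mult_pos_pos zero_less_power)
    have EBs: "E \<subseteq> Bs" using E Bs_def by simp
    have Bsm: "Bs \<in> sets lebesgue" unfolding Bs_def by simp
    have intE: "set_integrable lebesgue E b" using BMO_int_ball assms(1) E by blast
    have intB: "set_integrable lebesgue Bs b" using BMO_int_ball assms(1) Bsm Bs_def by blast
    have cE: "set_integrable lebesgue E (\<lambda>_. a)"
      using Efm unfolding set_integrable_def fmeasurable_def
      by (auto intro!: integrable_scaleR_left integrable_real_indicator)
    have cB: "set_integrable lebesgue Bs (\<lambda>_. a)"
      using lmeasurable_ball[of x s] unfolding Bs_def set_integrable_def fmeasurable_def
      by (auto intro!: integrable_scaleR_left integrable_real_indicator)
    have iE: "set_integrable lebesgue E (\<lambda>y. b y - a)" using intE cE by auto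
    have iB: "set_integrable lebesgue Bs (\<lambda>y. b y - a)" using intB cB by auto
    have aE: "set_integrable lebesgue E (\<lambda>y. \<bar>b y - a\<bar>)" using set_integrable_abs[OF iE] .
    have aB: "set_integrable lebesgue Bs (\<lambda>y. \<bar>b y - a\<bar>)" using set_integrable_abs[OF iB] .
    have eq1: "(LINT y:E|lebesgue. b y - a) = (LINT y:E|lebesgue. b y) - a * measure lebesgue E"
    proof -
      have "(LINT y:E|lebesgue. a) = measure lebesgue E *\<^sub>R a"
        using Efm unfolding fmeasurable_def by (intro set_integral_const) auto
      then show ?thesis using intE cE by simp
    qed
    have le1: "(LINT y:E|lebesgue. b y - a) \<le> (LINT y:E|lebesgue. \<bar>b y - a\<bar>)"
      by (rule set_integral_mono[OF iE aE]) simp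
    have le2: "(LINT y:E|lebesgue. \<bar>b y - a\<bar>) \<le> (LINT y:Bs|lebesgue. \<bar>b y - a\<bar>)"
      using aE aB unfolding set_lebesgue_integral_def set_integrable_def
      by (rule integral_mono) (use EBs in \<open>auto simp: indicator_def\<close>)
    have le3: "(LINT y:Bs|lebesgue. \<bar>b y - a\<bar>) \<le> M * measure lebesgue Bs"
    proof -
      have "avg (\<lambda>y. \<bar>b y - a\<bar>) Bs \<le> M" using M[OF s] unfolding a_def Bs_def by simp
      moreover have "measure lebesgue Bs > 0" using mB w s by simp
      ultimately show ?thesis unfolding avg_def by (simp add: divide_le_eq)
    qed
    have main: "(LINT y:E|lebesgue. b y) - a * measure lebesgue E \<le> M * (s ^ CARD('n) * w)"
      using eq1 le1 le2 le3 unfolding mB by linarith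
    have M0: "M \<ge> 0"
    proof -
      have "(LINT y:Bs|lebesgue. \<bar>b y - a\<bar>) \<ge> 0"
        unfolding set_lebesgue_integral_def by (rule Bochner_Integration.integral_nonneg) (auto simp: indicator_def)
      then have "avg (\<lambda>y. \<bar>b y - a\<bar>) Bs \<ge> 0" unfolding avg_def by simp
      then show ?thesis using M[OF s, of x] unfolding a_def Bs_def by linarith
    qed
    have "M * (s ^ CARD('n) * w) \<le> K * measure lebesgue E"
    proof -
      have "M * (s ^ CARD('n) * w) = K * ((k * s) ^ CARD('n) * w)"
        unfolding K_def using assms(2) by (simp add: power_mult_distrib field_simps)
      also have "\<dots> \<le> K * measure lebesgue E"
        using mE M0 assms(2) unfolding K_def by (intro mult_left_mono) auto
      finally show ?thesis .
    qed
    then have "(LINT y:E|lebesgue. b y) \<le> (a + K) * measure lebesgue E"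
      using main by (simp add: algebra_simps)
    then have "avg b E \<le> a + K" unfolding avg_def using mEpos by (simp add: divide_le_eq)
    then show ?thesis unfolding a_def Bs_def .
  qed
  then show ?thesis by blast
qed

lemma critical_step:
  fixes A :: "real^'n^'n" and b :: "real^'n \<Rightarrow> real"
  assumes inv: "invertible A" and bA: "b \<in> BMO_A A"
    and cz: "critical_point b z"
  shows "critical_point b (A *v z)"
proof -
  have bB: "b \<in> BMO" using bA unfolding BMO_A_def by auto
  obtain M2 where M2: "\<And>c r. r > 0 \<Longrightarrow>
      \<bar>avg b (ball c r) - avg b ((\<lambda>x. A *v x) ` ball c r)\<bar> \<le> M2"
    using bA unfolding BMO_A_def by auto
  obtain A' :: "real^'n^'n" where A'1: "A' ** A = mat 1" and A'2: "A ** A' = mat 1"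
    using inv unfolding invertible_def by auto
  obtain B where B: "B > 0" "\<And>v. norm (A *v v) \<le> B * norm v"
    using linear_bounded_pos[OF matrix_vector_mul_linear[of A]] by blast
  obtain B' where B': "B' > 0" "\<And>v. norm (A' *v v) \<le> B' * norm v"
    using linear_bounded_pos[OF matrix_vector_mul_linear[of A']] by blast
  define k where "k = 1 / (B * B')"
  have k: "k > 0" unfolding k_def using B B' by simp
  obtain K where K: "\<And>E x s. s > 0 \<Longrightarrow> E \<in> sets lebesgue \<Longrightarrow> ball x (k * s) \<subseteq> E \<Longrightarrow>
      E \<subseteq> ball x s \<Longrightarrow> avg b E \<le> avg b (ball x s) + K"
    using avg_subset_ball[OF bB k] by blast
  have AA': "\<And>y. A *v (A' *v y) = y" using A'2 by (simp add: matrix_vector_mul_assoc)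
  have A'A: "\<And>y. A' *v (A *v y) = y" using A'1 by (simp add: matrix_vector_mul_assoc)
  show "critical_point b (A *v z)"
    unfolding critical_point_def
  proof (intro allI impI)
    fix \<epsilon> N :: real assume e: "\<epsilon> > 0" and N: "N > 0"
    define \<delta> where "\<delta> = \<epsilon> / B"
    have d: "\<delta> > 0" unfolding \<delta>_def using e B by simp
    define N' where "N' = N + \<bar>M2\<bar> + \<bar>K\<bar>"
    have N': "N' > 0" unfolding N'_def using N by simp
    obtain c r where r: "r > 0" and sub: "ball c r \<subseteq> ball z \<delta>" and big: "avg b (ball c r) > N'"
      using cz d N' unfolding critical_point_def by blast
    define E where "E = (\<lambda>x. A *v x) ` ball c r"
    define s where "s = B * r"
    have s: "s > 0" unfolding s_def using B r by simp
    have E1: "E \<subseteq> ball (A *v c) s"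
    proof
      fix y assume "y \<in> E"
      then obtain w where w: "w \<in> ball c r" "y = A *v w" unfolding E_def by auto
      have "dist (A *v c) y = norm (A *v (c - w))"
        using w by (simp add: dist_norm matrix_vector_mult_diff_distrib)
      also have "\<dots> \<le> B * norm (c - w)" by (rule B(2))
      also have "\<dots> < B * r" using w B by (simp add: dist_norm)
      finally show "y \<in> ball (A *v c) s" unfolding s_def by simp
    qed
    have E2: "ball (A *v c) (k * s) \<subseteq> E"
    proof
      fix y assume y: "y \<in> ball (A *v c) (k * s)"
      have ks: "k * s = r / B'" unfolding k_def s_def using B by simp
      have "dist c (A' *v y) = norm (A' *v (A *v c - y))"
        by (simp add: dist_norm matrix_vector_mult_diff_distrib A'A)
      also have "\<dots> \<le> B' * norm (A *v c - y)" by (rule B'(2))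
      also have "\<dots> < B' * (r / B')"
        using y B' ks by (intro mult_strict_left_mono) (auto simp: dist_norm)
      also have "\<dots> = r" using B' by simp
      finally have "A' *v y \<in> ball c r" by simp
      then show "y \<in> E" unfolding E_def by (rule rev_image_eqI) (rule AA'[symmetric])
    qed
    have Eeq: "E = (\<lambda>y. A' *v y) -` ball c r"
    proof
      show "E \<subseteq> (\<lambda>y. A' *v y) -` ball c r" unfolding E_def using A'A by auto
      show "(\<lambda>y. A' *v y) -` ball c r \<subseteq> E"
      proof
        fix y assume "y \<in> (\<lambda>y. A' *v y) -` ball c r"
        then have "A' *v y \<in> ball c r" by simp
        then show "y \<in> E" unfolding E_def by (rule rev_image_eqI) (rule AA'[symmetric])
      qed
    qed
    have "open E" unfolding Eeq
      by (intro continuous_open_vimage open_ball linear_continuous_at)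
         (rule matrix_vector_mul_bounded_linear)
    moreover have "bounded E" using E1 bounded_subset bounded_ball by blast
    ultimately have "E \<in> lmeasurable" by (rule lmeasurable_open[rotated])
    then have Em: "E \<in> sets lebesgue" by (rule fmeasurableD)
    have KE: "avg b E \<le> avg b (ball (A *v c) s) + K" using K[OF s Em E2 E1] .
    have "avg b (ball c r) - avg b E \<le> M2" using M2[OF r, of c] unfolding E_def by linarith
    moreover have "N' \<ge> N + M2 + K" unfolding N'_def by linarith
    ultimately have "avg b (ball (A *v c) s) > N" using KE big by linarith
    moreover have "ball (A *v c) s \<subseteq> ball (A *v z) \<epsilon>"
    proof -
      have "dist c z + r \<le> \<delta> \<or> r \<le> 0" using sub ball_subset_ball_iff[of c r z \<delta>] by simp
      then have "dist c z + r \<le> \<delta>" using r by simp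
      have "dist (A *v c) (A *v z) = norm (A *v (c - z))"
        by (simp add: dist_norm matrix_vector_mult_diff_distrib)
      also have "\<dots> \<le> B * dist c z" using B(2) by (simp add: dist_norm)
      finally have "dist (A *v c) (A *v z) + s \<le> B * (dist c z + r)"
        unfolding s_def by (simp add: algebra_simps)
      also have "\<dots> \<le> B * \<delta>" using \<open>dist c z + r \<le> \<delta>\<close> B by simp
      also have "\<dots> = \<epsilon>" unfolding \<delta>_def using B by simp
      finally show ?thesis using ball_subset_ball_iff[of "A *v c" s "A *v z" \<epsilon>] by simp
    qed
    ultimately show "\<exists>c r. r > 0 \<and> ball c r \<subseteq> ball (A *v z) \<epsilon> \<and> avg b (ball c r) > N"
      using s by blast
  qed
qed

theorem proposition3p8:
  fixes A :: "real^'n^'n" and b :: "real^'n \<Rightarrow> real"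
  assumes "invertible A" and "b \<in> BMO_A A"
  shows "(\<forall>z. \<not> critical_point b z)
    \<or> {z. critical_point b z} = {0}
    \<or> (\<forall>z. z \<noteq> 0 \<and> critical_point b z \<longrightarrow>
          (\<forall>j::nat. j \<ge> 1 \<longrightarrow> critical_point b (((\<lambda>x. A *v x) ^^ j) z)))"
proof -
  have step: "critical_point b (A *v y)" if "critical_point b y" for y
    using critical_step[OF assms that] .
  have all: "critical_point b (((\<lambda>x. A *v x) ^^ j) z)" if cz0: "critical_point b z" for z j
  proof (induction j)
    case 0
    show ?case using cz0 by simp
  next
    case (Suc j)
    have eq: "((\<lambda>x. A *v x) ^^ Suc j) z = A *v (((\<lambda>x. A *v x) ^^ j) z)" by simp
    show ?case unfolding eq by (rule step[OF Suc.IH])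
  qed
  have "\<forall>z. z \<noteq> 0 \<and> critical_point b z \<longrightarrow>
          (\<forall>j::nat. j \<ge> 1 \<longrightarrow> critical_point b (((\<lambda>x. A *v x) ^^ j) z))"
    using all by blast
  then show ?thesis by (intro disjI2)
qed

end
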